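(* For all positive integers $d$ and $k$ there exists a triangulation $T$ of the sphere $S^d$ such that $\Delta_{0,1}(T) \leq (d+1)(d^2+d+2)$, $|V(T)| = (d^2+d+1)k + (d+2)^2$, and $T$ has $k$ $d$-dimensional faces which are pairwise vertex-disjoint and nonadjacent. Consequently, for every $d$ there exists $L$ such that for every $k$ there is a triangulation $T$ of $S^d$ with $\Delta(T) \leq L$ and $|V(T)| \leq Lk$ which has $k$ $d$-dimensional faces $t_1,\dots,t_k$ that are pairwise vertex-disjoint and nonadjacent.
   Context: For a finite simplicial complex $X$, $\mathrm{skel}_k(X)$ is the set of $k$-dimensional faces, $\Delta_{i,j}(X) = \max_{\sigma \in \mathrm{skel}_i(X)} |\{\tau \in \mathrm{skel}_j(X) : \sigma \subseteq \tau\}|$, and $\Delta(X) = \max_{i,j}\Delta_{i,j}(X)$. Two faces are nonadjacent if there is no edge between a vertex of one and a vertex of the other. *)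

theory Defs
  imports "HOL-Analysis.Analysis"
begin

definition simplicial_complex :: "nat set set \<Rightarrow> bool" where
  "simplicial_complex X \<longleftrightarrow> finite X \<and>
     (\<forall>\<sigma>\<in>X. finite \<sigma> \<and> \<sigma> \<noteq> {}) \<and>
     (\<forall>\<sigma>\<in>X. \<forall>\<tau>. \<tau> \<subseteq> \<sigma> \<and> \<tau> \<noteq> {} \<longrightarrow> \<tau> \<in> X)"

definition vertices :: "nat set set \<Rightarrow> nat set" where
  "vertices X = \<Union>X"

definition skel :: "nat \<Rightarrow> nat set set \<Rightarrow> nat set set" where
  "skel k X = {\<sigma>\<in>X. card \<sigma> = k + 1}"

definition Delta_ij :: "nat \<Rightarrow> nat \<Rightarrow> nat set set \<Rightarrow> nat" where
  "Delta_ij i j X = Max (insert 0 ((\<lambda>\<sigma>. card {\<tau>\<in>skel j X. \<sigma> \<subseteq> \<tau>}) ` skel i X))"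

text \<open>Delta(X) = max over all i, j; indices beyond the number of vertices contribute 0.\<close>
definition Delta :: "nat set set \<Rightarrow> nat" where
  "Delta X = Max ((\<lambda>(i,j). Delta_ij i j X) ` ({..card (vertices X)} \<times> {..card (vertices X)}))"

text \<open>Geometric realization |X| inside the space nat \<Rightarrow> real (product topology; since
 only finitely many coordinates are used this is the usual Euclidean topology):
 barycentric coordinate functions supported on a face.\<close>
definition realization :: "nat set set \<Rightarrow> (nat \<Rightarrow> real) set" where
  "realization X = {f. \<exists>\<sigma>\<in>X. (\<forall>v. f v \<ge> 0) \<and> (\<forall>v. v \<notin> \<sigma> \<longrightarrow> f v = 0) \<and> (\<Sum>v\<in>\<sigma>. f v) = 1}"

text \<open>T is a triangulation of the d-sphere, d+1 = CARD('n), i.e. of the unit sphere in real^'n.\<close>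
definition triangulates_sphere :: "nat set set \<Rightarrow> ('n::finite) itself \<Rightarrow> bool" where
  "triangulates_sphere T _ \<longleftrightarrow> simplicial_complex T \<and>
     realization T homeomorphic (sphere (0 :: real ^ 'n) 1)"

definition nonadjacent :: "nat set set \<Rightarrow> nat set \<Rightarrow> nat set \<Rightarrow> bool" where
  "nonadjacent X \<sigma> \<tau> \<longleftrightarrow> (\<forall>u\<in>\<sigma>. \<forall>v\<in>\<tau>. {u, v} \<notin> skel 1 X)"

definition has_separated_facets :: "nat set set \<Rightarrow> nat \<Rightarrow> nat \<Rightarrow> bool" where
  "has_separated_facets X d k \<longleftrightarrow> (\<exists>t :: nat \<Rightarrow> nat set.
     (\<forall>i<k. t i \<in> skel d X) \<and>
     (\<forall>i<k. \<forall>j<k. i \<noteq> j \<longrightarrow> t i \<inter> t j = {} \<and> nonadjacent X (t i) (t j)))"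

end

theory Submission
  imports Defs
begin

lemma homeo_explicit:
  assumes "continuous_on S f" "continuous_on T g" "f ` S \<subseteq> T" "g ` T \<subseteq> S"
    "\<And>x. x \<in> S \<Longrightarrow> g (f x) = x" "\<And>y. y \<in> T \<Longrightarrow> f (g y) = y"
  shows "S homeomorphic T"
proof -
  have "f ` S = T"
  proof
    show "T \<subseteq> f ` S"
    proof
      fix y assume "y \<in> T"
      then have "g y \<in> S" "f (g y) = y" using assms by auto
      then show "y \<in> f ` S" by (metis image_eqI)
    qed
  qed (use assms in auto)
  moreover have "g ` T = S"
  proof
    show "S \<subseteq> g ` T"
    proof
      fix x assume "x \<in> S"
      then have "f x \<in> T" "g (f x) = x" using assms by auto
      then show "x \<in> g ` T" by (metis image_eqI)
    qed
  qed (use assms in auto)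
  ultimately have "homeomorphism S T f g" unfolding homeomorphism_def using assms by auto
  then show ?thesis unfolding homeomorphic_def by blast
qed

lemma cont_coord: "continuous_on S (\<lambda>f. f i :: 'b::topological_space)"
  by (rule continuous_on_subset[OF continuous_on_product_coordinates]) simp

lemma cont_Min_coord:
  assumes "finite A" "A \<noteq> {}"
  shows "continuous_on S (\<lambda>f::nat\<Rightarrow>real. Min ((\<lambda>v. f v) ` A))"
  using assms
proof (induction A rule: finite_ne_induct)
  case (singleton x)
  then show ?case
    by (simp add: cont_coord)
next
  case (insert x F)
  have "(\<lambda>f::nat\<Rightarrow>real. Min ((\<lambda>v. f v) ` insert x F)) = (\<lambda>f. min (f x) (Min ((\<lambda>v. f v) ` F)))"
    using insert by (auto simp: Min_insert)
  then show ?case using insert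
    by (auto intro!: continuous_intros cont_coord)
qed

definition sub :: "nat set set \<Rightarrow> nat set \<Rightarrow> nat \<Rightarrow> nat set set" where
  "sub T \<sigma> w = (T - {\<sigma>}) \<union> (\<lambda>\<rho>. insert w \<rho>) ` {\<rho>. \<rho> \<subset> \<sigma>}"

definition sPhi :: "nat set \<Rightarrow> nat \<Rightarrow> (nat \<Rightarrow> real) \<Rightarrow> nat \<Rightarrow> real" where
  "sPhi \<sigma> w f = (\<lambda>v. if v = w then 0 else if v \<in> \<sigma> then f v + f w / real (card \<sigma>) else f v)"

definition sPsi :: "nat set \<Rightarrow> nat \<Rightarrow> (nat \<Rightarrow> real) \<Rightarrow> nat \<Rightarrow> real" where
  "sPsi \<sigma> w f = (\<lambda>v. if v = w then real (card \<sigma>) * Min (f ` \<sigma>)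
     else if v \<in> \<sigma> then f v - Min (f ` \<sigma>) else f v)"

lemma real_mem: "f \<in> realization X \<longleftrightarrow> (\<exists>\<tau>\<in>X. (\<forall>v. 0 \<le> f v) \<and> (\<forall>v. v \<notin> \<tau> \<longrightarrow> f v = 0) \<and> sum f \<tau> = 1)"
  by (simp add: realization_def)

lemma sub_homeo:
  assumes sc: "simplicial_complex T" and sT: "\<sigma> \<in> T"
    and mx: "\<And>\<tau>. \<tau> \<in> T \<Longrightarrow> \<sigma> \<subseteq> \<tau> \<Longrightarrow> \<tau> = \<sigma>"
    and wv: "w \<notin> vertices T"
  shows "realization (sub T \<sigma> w) homeomorphic realization T"
proof -
  have fin: "finite \<sigma>" and ne: "\<sigma> \<noteq> {}" using sc sT by (auto simp: simplicial_complex_def)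
  have wt: "\<And>\<tau>. \<tau> \<in> T \<Longrightarrow> w \<notin> \<tau>" using wv by (auto simp: vertices_def)
  hence ws: "w \<notin> \<sigma>" using sT by blast
  define c where "c = real (card \<sigma>)"
  have cpos: "c > 0" using fin ne by (simp add: c_def card_gt_0_iff)
  have Psi_id: "sPsi \<sigma> w f = f" if h: "\<tau> \<in> T" "\<forall>v. 0 \<le> f v" "\<forall>v. v \<notin> \<tau> \<longrightarrow> f v = 0" "\<not> \<sigma> \<subseteq> \<tau>" for f \<tau>
  proof -
    obtain x where x: "x \<in> \<sigma>" "x \<notin> \<tau>" using h by blast
    have "Min (f ` \<sigma>) \<le> f x" using fin x by auto
    moreover have "Min (f ` \<sigma>) \<ge> 0" using fin ne h by auto
    ultimately have m0: "Min (f ` \<sigma>) = 0" using x h by auto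
    show ?thesis using m0 wt[OF h(1)] h by (auto simp: sPsi_def)
  qed
  have PsiT: "sPsi \<sigma> w f \<in> realization (sub T \<sigma> w)" if hf: "f \<in> realization T" for f
  proof -
    obtain \<tau> where t: "\<tau> \<in> T" "\<forall>v. 0 \<le> f v" "\<forall>v. v \<notin> \<tau> \<longrightarrow> f v = 0" "sum f \<tau> = 1"
      using hf by (auto simp: real_mem)
    show ?thesis
    proof (cases "\<sigma> \<subseteq> \<tau>")
      case False
      have "\<tau> \<in> sub T \<sigma> w" using t False by (auto simp: sub_def)
      then show ?thesis using Psi_id[OF t(1-3) False] t by (auto simp: real_mem)
    next
      case True
      hence ts: "\<tau> = \<sigma>" using mx t by auto
      define \<mu> where "\<mu> = Min (f ` \<sigma>)"
      have "\<mu> \<in> f ` \<sigma>" using fin ne Min_in[of "f ` \<sigma>"] by (simp add: \<mu>_def)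
      then obtain x where x: "x \<in> \<sigma>" "f x = \<mu>" by auto
      have mle: "\<And>v. v \<in> \<sigma> \<Longrightarrow> \<mu> \<le> f v" using fin by (auto simp: \<mu>_def)
      have m0: "\<mu> \<ge> 0" using fin ne t by (auto simp: \<mu>_def)
      have face: "insert w (\<sigma> - {x}) \<in> sub T \<sigma> w" using x by (auto simp: sub_def)
      have s1: "sum (\<lambda>v. f v - \<mu>) \<sigma> = 1 - c * \<mu>"
        using t ts by (simp add: sum_subtractf c_def)
      have s2: "sum (\<lambda>v. f v - \<mu>) (\<sigma> - {x}) = 1 - c * \<mu>"
        using s1 x fin by (simp add: sum_diff1)
      have "sum (sPsi \<sigma> w f) (insert w (\<sigma> - {x})) = c * \<mu> + sum (sPsi \<sigma> w f) (\<sigma> - {x})"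
        using fin ws by (simp add: sPsi_def c_def \<mu>_def)
      also have "sum (sPsi \<sigma> w f) (\<sigma> - {x}) = sum (\<lambda>v. f v - \<mu>) (\<sigma> - {x})"
        using ws by (intro sum.cong) (auto simp: sPsi_def \<mu>_def)
      finally have "sum (sPsi \<sigma> w f) (insert w (\<sigma> - {x})) = 1" using s2 by simp
      moreover have "\<forall>v. 0 \<le> sPsi \<sigma> w f v"
        using m0 mle t cpos by (auto simp: sPsi_def \<mu>_def[symmetric] c_def[symmetric])
      moreover have "\<forall>v. v \<notin> insert w (\<sigma> - {x}) \<longrightarrow> sPsi \<sigma> w f v = 0"
        using x t ts by (auto simp: sPsi_def \<mu>_def[symmetric])
      ultimately show ?thesis using face unfolding real_mem by (intro bexI[of _ "insert w (\<sigma> - {x})"]) blast+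
    qed
  qed
  have Phi_id: "sPhi \<sigma> w f = f" if "\<forall>v. v \<notin> \<tau> \<longrightarrow> f v = 0" "w \<notin> \<tau>" for f \<tau>
    using that by (auto simp: sPhi_def)
  have PhiS: "sPhi \<sigma> w f \<in> realization T \<and> sPsi \<sigma> w (sPhi \<sigma> w f) = f"
    if hf: "f \<in> realization (sub T \<sigma> w)" for f
  proof -
    obtain \<tau> where t: "\<tau> \<in> sub T \<sigma> w" "\<forall>v. 0 \<le> f v" "\<forall>v. v \<notin> \<tau> \<longrightarrow> f v = 0" "sum f \<tau> = 1"
      using hf by (auto simp: real_mem)
    show ?thesis
    proof (cases "\<tau> \<in> T - {\<sigma>}")
      case True
      have e: "sPhi \<sigma> w f = f" using Phi_id[OF t(3)] wt True by auto
      have "\<not> \<sigma> \<subseteq> \<tau>" using mx True by auto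
      then show ?thesis using e Psi_id[OF _ t(2,3)] True t by (auto simp: real_mem)
    next
      case False
      then obtain \<rho> where r: "\<tau> = insert w \<rho>" "\<rho> \<subset> \<sigma>" using t by (auto simp: sub_def)
      obtain x where x: "x \<in> \<sigma>" "x \<notin> \<rho>" using r by blast
      have fx: "f x = 0" using t r x ws by auto
      have wr: "w \<notin> \<rho>" using r ws by auto
      have finr: "finite \<rho>" using r fin finite_subset by auto
      have sr: "sum f \<sigma> = sum f \<rho>"
        using r t fin ws by (intro sum.mono_neutral_right) auto
      have "sum (sPhi \<sigma> w f) \<sigma> = sum (\<lambda>v. f v + f w / c) \<sigma>"
        using ws by (intro sum.cong) (auto simp: sPhi_def c_def)
      also have "\<dots> = sum f \<sigma> + f w" using cpos by (simp add: sum.distrib c_def)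
      also have "\<dots> = 1" using t r sr wr finr by simp
      finally have s1: "sum (sPhi \<sigma> w f) \<sigma> = 1" .
      have in1: "sPhi \<sigma> w f \<in> realization T"
        using s1 sT t r cpos unfolding real_mem
        by (intro bexI[of _ \<sigma>]) (auto simp: sPhi_def c_def[symmetric] intro!: add_nonneg_nonneg divide_nonneg_pos)
      have img: "sPhi \<sigma> w f ` \<sigma> = (\<lambda>v. f v + f w / c) ` \<sigma>"
        using ws by (auto simp: sPhi_def c_def)
      have "Min ((\<lambda>v. f v + f w / c) ` \<sigma>) = f w / c"
      proof (rule Min_eqI)
        show "finite ((\<lambda>v. f v + f w / c) ` \<sigma>)" using fin by simp
        show "\<And>y. y \<in> (\<lambda>v. f v + f w / c) ` \<sigma> \<Longrightarrow> f w / c \<le> y" using t by auto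
        show "f w / c \<in> (\<lambda>v. f v + f w / c) ` \<sigma>" using x fx by (auto intro!: image_eqI[of _ _ x])
      qed
      hence mn: "Min (sPhi \<sigma> w f ` \<sigma>) = f w / c" using img by simp
      have "sPsi \<sigma> w (sPhi \<sigma> w f) = f"
        using cpos t r ws unfolding sPsi_def mn c_def[symmetric]
        by (auto simp: sPhi_def c_def[symmetric])
      then show ?thesis using in1 by simp
    qed
  qed
  have PsiPhi: "sPhi \<sigma> w (sPsi \<sigma> w f) = f" if hf: "f \<in> realization T" for f
  proof -
    obtain \<tau> where t: "\<tau> \<in> T" "\<forall>v. v \<notin> \<tau> \<longrightarrow> f v = 0"
      using hf by (auto simp: real_mem)
    have "f w = 0" using t wt by auto
    then show ?thesis using cpos ws by (auto simp: sPhi_def sPsi_def c_def[symmetric])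
  qed
  have c1: "continuous_on S (sPhi \<sigma> w)" for S
  proof (rule continuous_on_coordinatewise_then_product)
    fix i show "continuous_on S (\<lambda>x. sPhi \<sigma> w x i)"
      by (cases "i = w"; cases "i \<in> \<sigma>") (use cpos in \<open>auto simp: sPhi_def c_def intro!: continuous_intros cont_coord\<close>)
  qed
  have c2: "continuous_on S (sPsi \<sigma> w)" for S
  proof (rule continuous_on_coordinatewise_then_product)
    fix i show "continuous_on S (\<lambda>x. sPsi \<sigma> w x i)"
      by (cases "i = w"; cases "i \<in> \<sigma>") (auto simp: sPsi_def intro!: continuous_intros cont_coord cont_Min_coord fin ne)
  qed
  show ?thesis
    by (rule homeo_explicit[OF c1 c2]) (use PhiS PsiT PsiPhi in auto)
qed



lemma sum_split2: "(\<Sum>v<(n::nat)+n. g v) = (\<Sum>j<n. g j) + (\<Sum>j<n. g (n+j)::real)"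
proof -
  have "(\<Sum>v<n+n. g v) = (\<Sum>v\<in>{0..<n}. g v) + (\<Sum>v\<in>{n..<n+n}. g v)"
    by (simp add: sum.atLeastLessThan_concat atLeast0LessThan[symmetric])
  also have "(\<Sum>v\<in>{n..<n+n}. g v) = (\<Sum>j\<in>{0..<n}. g (j+n))"
    using sum.shift_bounds_nat_ivl[of g 0 n n] by simp
  finally show ?thesis by (simp add: atLeast0LessThan add.commute)
qed

definition cross :: "nat \<Rightarrow> nat set set" where
  "cross n = {\<tau>. \<tau> \<noteq> {} \<and> \<tau> \<subseteq> {..<n+n} \<and> (\<forall>j<n. \<not> (j \<in> \<tau> \<and> n + j \<in> \<tau>))}"

lemma cross_sc: "simplicial_complex (cross n)"
proof -
  have "cross n \<subseteq> Pow {..<n+n}" by (auto simp: cross_def)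
  hence "finite (cross n)" by (rule finite_subset) simp
  moreover have "\<forall>\<sigma>\<in>cross n. finite \<sigma> \<and> \<sigma> \<noteq> {}" 
  proof
    fix \<sigma> assume "\<sigma> \<in> cross n"
    hence "\<sigma> \<subseteq> {..<n+n}" "\<sigma> \<noteq> {}" by (auto simp: cross_def)
    thus "finite \<sigma> \<and> \<sigma> \<noteq> {}" using finite_subset by blast
  qed
  moreover have "\<forall>\<sigma>\<in>cross n. \<forall>\<tau>. \<tau> \<subseteq> \<sigma> \<and> \<tau> \<noteq> {} \<longrightarrow> \<tau> \<in> cross n" by (auto simp: cross_def)
  ultimately show ?thesis unfolding simplicial_complex_def by blast
qed

definition l1 :: "real^'n \<Rightarrow> real" where "l1 x = (\<Sum>i\<in>UNIV. \<bar>x$i\<bar>)"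

lemma l1_scale: "l1 (c *\<^sub>R x) = \<bar>c\<bar> * l1 x"
  by (simp add: l1_def sum_distrib_left abs_mult)

lemma l1_pos: "x \<noteq> 0 \<Longrightarrow> l1 x > 0"
proof -
  assume "x \<noteq> 0"
  then obtain i where "x$i \<noteq> 0" using vec_eq_iff[of x 0] by auto
  hence "\<bar>x$i\<bar> > 0" by simp
  moreover have "\<bar>x$i\<bar> \<le> l1 x" unfolding l1_def
    by (rule member_le_sum) auto
  ultimately show ?thesis by simp
qed

lemma l1_0[simp]: "l1 0 = 0"
  by (simp add: l1_def)

lemma cont_l1[continuous_intros]: "continuous_on S l1"
  unfolding l1_def by (intro continuous_on_sum continuous_on_rabs continuous_on_component continuous_on_id)

lemma l1_nz: "l1 x = 1 \<Longrightarrow> x \<noteq> 0"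
  by (metis l1_0 zero_neq_one)

lemma l1_sphere: "{x::real^'n. l1 x = 1} homeomorphic sphere (0::real^'n) 1"
proof -
  define f where "f = (\<lambda>x::real^'n. inverse (norm x) *\<^sub>R x)"
  define g where "g = (\<lambda>y::real^'n. inverse (l1 y) *\<^sub>R y)"
  have nz1: "\<forall>x\<in>{x::real^'n. l1 x = 1}. norm x \<noteq> 0"
    using l1_nz by auto
  have nz2: "\<forall>x\<in>sphere (0::real^'n) 1. l1 x \<noteq> 0"
  proof
    fix x :: "real^'n" assume "x \<in> sphere 0 1"
    hence "x \<noteq> 0" by auto
    thus "l1 x \<noteq> 0" using l1_pos by force
  qed
  have c1: "continuous_on {x::real^'n. l1 x = 1} f"
    unfolding f_def by (intro continuous_on_scaleR continuous_on_inverse continuous_on_norm continuous_on_id nz1)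
  have c2: "continuous_on (sphere 0 1) g"
    unfolding g_def by (intro continuous_on_scaleR continuous_on_inverse cont_l1 continuous_on_id nz2)
  have i1: "f ` {x::real^'n. l1 x = 1} \<subseteq> sphere 0 1"
  proof
    fix y assume "y \<in> f ` {x::real^'n. l1 x = 1}"
    then obtain x where x: "l1 x = 1" "y = inverse (norm x) *\<^sub>R x" by (auto simp: f_def)
    hence "x \<noteq> 0" using l1_nz by blast
    thus "y \<in> sphere 0 1" using x by simp
  qed
  have i2: "g ` sphere 0 1 \<subseteq> {x::real^'n. l1 x = 1}"
  proof
    fix z assume "z \<in> g ` sphere (0::real^'n) 1"
    then obtain y where y: "y \<in> sphere (0::real^'n) 1" "z = inverse (l1 y) *\<^sub>R y" by (auto simp: g_def)
    hence "y \<noteq> 0" by auto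
    hence "l1 y > 0" by (rule l1_pos)
    thus "z \<in> {x. l1 x = 1}" using y by (simp add: l1_scale)
  qed
  have e1: "g (f x) = x" if "x \<in> {x::real^'n. l1 x = 1}" for x
  proof -
    have "x \<noteq> 0" using that l1_nz by auto
    hence n: "norm x > 0" by simp
    have "l1 (inverse (norm x) *\<^sub>R x) = inverse (norm x)" using that n by (simp add: l1_scale)
    hence "g (f x) = (norm x * inverse (norm x)) *\<^sub>R x"
      by (simp add: f_def g_def)
    also have "\<dots> = x" using n by simp
    finally show ?thesis .
  qed
  have e2: "f (g y) = y" if "y \<in> sphere (0::real^'n) 1" for y
  proof -
    have "y \<noteq> 0" using that by auto
    hence p: "l1 y > 0" by (rule l1_pos)
    have n1: "norm y = 1" using that by simp
    have "norm (inverse (l1 y) *\<^sub>R y) = inverse (l1 y)" using p n1 by simp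
    hence "f (g y) = (l1 y * inverse (l1 y)) *\<^sub>R y"
      by (simp add: f_def g_def)
    also have "\<dots> = y" using p by simp
    finally show ?thesis .
  qed
  show ?thesis by (rule homeo_explicit[OF c1 c2 i1 i2 e1 e2])
qed



lemma cross_homeo:
  fixes e :: "'n::finite \<Rightarrow> nat"
  assumes e: "bij_betw e (UNIV::'n set) {..<n}"
  shows "realization (cross n) homeomorphic {x::real^'n. l1 x = 1}"
proof -
  define ei where "ei = inv_into UNIV e"
  have en: "\<And>i. e i < n" using e by (auto simp: bij_betw_def)
  have eei: "\<And>j. j < n \<Longrightarrow> e (ei j) = j" using e unfolding ei_def
    by (simp add: bij_betw_inv_into_right)
  have eie: "\<And>i. ei (e i) = i" using e unfolding ei_def
    by (simp add: bij_betw_def inv_into_f_f)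
  have reidx: "\<And>h. (\<Sum>i\<in>UNIV. h (e i)) = (\<Sum>j<n. h j :: real)"
    using sum.reindex_bij_betw[OF e] by blast
  define A where "A = (\<lambda>f::nat\<Rightarrow>real. (\<chi> i. f (e i) - f (n + e i)) :: real^'n)"
  define B where "B = (\<lambda>(x::real^'n) v. if v < n then max 0 (x $ ei v)
        else if v < n + n then max 0 (- (x $ ei (v - n))) else 0)"
  have cA: "continuous_on S A" for S
    unfolding A_def by (intro continuous_intros cont_coord)
  have cB: "continuous_on S B" for S
  proof (rule continuous_on_coordinatewise_then_product)
    fix v show "continuous_on S (\<lambda>x. B x v)"
      by (cases "v < n"; cases "v < n + n") (auto simp: B_def intro!: continuous_intros continuous_on_id)
  qed
  have AR: "A f \<in> {x. l1 x = 1}" if hf: "f \<in> realization (cross n)" for f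
  proof -
    obtain \<tau> where t: "\<tau> \<in> cross n" "\<forall>v. 0 \<le> f v" "\<forall>v. v \<notin> \<tau> \<longrightarrow> f v = 0" "sum f \<tau> = 1"
      using hf by (auto simp: real_mem)
    have one0: "f j = 0 \<or> f (n + j) = 0" if "j < n" for j
      using t that by (auto simp: cross_def)
    have "l1 (A f) = (\<Sum>i\<in>UNIV. \<bar>f (e i) - f (n + e i)\<bar>)" by (simp add: l1_def A_def)
    also have "\<dots> = (\<Sum>i\<in>UNIV. f (e i) + f (n + e i))"
      using one0 en t(2) by (intro sum.cong refl) (metis abs_of_nonneg abs_minus_commute add.right_neutral add_0 diff_0 diff_zero)
    also have "\<dots> = (\<Sum>j<n. f j + f (n + j))" by (rule reidx)
    also have "\<dots> = (\<Sum>v<n+n. f v)" by (simp add: sum_split2 sum.distrib)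
    also have "\<dots> = sum f \<tau>"
      using t by (intro sum.mono_neutral_right) (auto simp: cross_def)
    finally show ?thesis using t by simp
  qed
  have BA: "B (A f) = f" if hf: "f \<in> realization (cross n)" for f
  proof
    fix v
    obtain \<tau> where t: "\<tau> \<in> cross n" "\<forall>v. 0 \<le> f v" "\<forall>v. v \<notin> \<tau> \<longrightarrow> f v = 0"
      using hf by (auto simp: real_mem)
    have one0: "f j = 0 \<or> f (n + j) = 0" if "j < n" for j
      using t that by (auto simp: cross_def)
    show "B (A f) v = f v"
    proof (cases "v < n")
      case True
      then show ?thesis using one0[OF True] t(2)[rule_format, of v] t(2)[rule_format, of "n+v"]
        by (auto simp: B_def A_def eei)
    next
      case False
      show ?thesis
      proof (cases "v < n + n")
        case True
        define j where "j = v - n"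
        have j: "j < n" "v = n + j" using True False by (auto simp: j_def)
        then show ?thesis using one0[OF j(1)] t(2)[rule_format, of v] t(2)[rule_format, of j] False True
          by (auto simp: B_def A_def eei)
      next
        case F2: False
        have "v \<notin> \<tau>" using t F2 by (auto simp: cross_def)
        then show ?thesis using t False F2 by (auto simp: B_def)
      qed
    qed
  qed
  have AB: "A (B x) = x" for x
    unfolding A_def B_def by (simp add: vec_eq_iff en eie max_def)
  have BP: "B x \<in> realization (cross n)" if hx: "x \<in> {x. l1 x = 1}" for x
  proof -
    define \<tau> where "\<tau> = {v. v < n + n \<and> B x v \<noteq> 0}"
    have nn: "\<forall>v. 0 \<le> B x v" by (auto simp: B_def)
    have z: "\<forall>v. v \<notin> \<tau> \<longrightarrow> B x v = 0" by (auto simp: \<tau>_def B_def)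
    have "sum (B x) \<tau> = (\<Sum>v<n+n. B x v)"
      using z by (intro sum.mono_neutral_left) (auto simp: \<tau>_def)
    also have "\<dots> = (\<Sum>j<n. B x j + B x (n + j))" by (simp add: sum_split2 sum.distrib)
    also have "\<dots> = (\<Sum>j<n. \<bar>x $ ei j\<bar>)"
      by (intro sum.cong refl) (auto simp: B_def)
    also have "\<dots> = (\<Sum>i\<in>UNIV. \<bar>x $ ei (e i)\<bar>)" by (rule reidx[symmetric])
    also have "\<dots> = 1" using hx by (simp add: eie l1_def)
    finally have s: "sum (B x) \<tau> = 1" .
    have "\<tau> \<noteq> {}" using s by auto
    moreover have "\<not> (j \<in> \<tau> \<and> n + j \<in> \<tau>)" if "j < n" for j
      using that by (auto simp: \<tau>_def B_def)
    ultimately have "\<tau> \<in> cross n" by (auto simp: cross_def \<tau>_def)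
    then show ?thesis using nn z s unfolding real_mem by blast
  qed
  show ?thesis
    by (rule homeo_explicit[OF cA cB]) (use AR BP BA AB in auto)
qed



lemma sub_sc:
  assumes sc: "simplicial_complex T" and sT: "\<sigma> \<in> T"
    and mx: "\<And>\<tau>. \<tau> \<in> T \<Longrightarrow> \<sigma> \<subseteq> \<tau> \<Longrightarrow> \<tau> = \<sigma>"
  shows "simplicial_complex (sub T \<sigma> w)"
proof -
  have fT: "finite T" and fm: "\<forall>\<tau>\<in>T. finite \<tau> \<and> \<tau> \<noteq> {}"
    and dc: "\<forall>\<tau>\<in>T. \<forall>\<rho>. \<rho> \<subseteq> \<tau> \<and> \<rho> \<noteq> {} \<longrightarrow> \<rho> \<in> T"
    using sc unfolding simplicial_complex_def by blast+
  have fs: "finite \<sigma>" using fm sT by auto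
  have "{\<rho>. \<rho> \<subset> \<sigma>} \<subseteq> Pow \<sigma>" by auto
  hence "finite {\<rho>. \<rho> \<subset> \<sigma>}" using fs by (simp add: finite_subset)
  hence f1: "finite (sub T \<sigma> w)" using fT by (simp add: sub_def)
  have f2: "\<forall>\<tau>\<in>sub T \<sigma> w. finite \<tau> \<and> \<tau> \<noteq> {}"
  proof
    fix \<tau> assume "\<tau> \<in> sub T \<sigma> w"
    then show "finite \<tau> \<and> \<tau> \<noteq> {}"
    proof (cases "\<tau> \<in> T - {\<sigma>}")
      case True then show ?thesis using fm by auto
    next
      case False
      then obtain \<rho> where "\<tau> = insert w \<rho>" "\<rho> \<subset> \<sigma>" using \<open>\<tau> \<in> sub T \<sigma> w\<close> by (auto simp: sub_def)
      then have "\<rho> \<subseteq> \<sigma>" by auto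
      then have "finite \<rho>" using fs by (rule finite_subset)
      then show ?thesis using \<open>\<tau> = insert w \<rho>\<close> by simp
    qed
  qed
  have f3: "\<forall>\<tau>\<in>sub T \<sigma> w. \<forall>\<rho>. \<rho> \<subseteq> \<tau> \<and> \<rho> \<noteq> {} \<longrightarrow> \<rho> \<in> sub T \<sigma> w"
  proof (intro ballI allI impI)
    fix \<tau> \<rho> assume t: "\<tau> \<in> sub T \<sigma> w" and r: "\<rho> \<subseteq> \<tau> \<and> \<rho> \<noteq> {}"
    show "\<rho> \<in> sub T \<sigma> w"
    proof (cases "\<tau> \<in> T - {\<sigma>}")
      case True
      hence "\<rho> \<in> T" using dc r by auto
      moreover have "\<rho> \<noteq> \<sigma>" using True mx r by auto
      ultimately show ?thesis by (auto simp: sub_def)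
    next
      case False
      then obtain \<alpha> where a: "\<tau> = insert w \<alpha>" "\<alpha> \<subset> \<sigma>" using t by (auto simp: sub_def)
      show ?thesis
      proof (cases "w \<in> \<rho>")
        case True
        hence "\<rho> = insert w (\<rho> - {w})" by auto
        moreover have "\<rho> - {w} \<subset> \<sigma>" using a r by auto
        ultimately show ?thesis unfolding sub_def by blast
      next
        case False
        hence "\<rho> \<subset> \<sigma>" using a r by auto
        hence "\<rho> \<in> T" "\<rho> \<noteq> \<sigma>" using dc sT r by auto
        thus ?thesis by (auto simp: sub_def)
      qed
    qed
  qed
  show ?thesis using f1 f2 f3 unfolding simplicial_complex_def by blast
qed

lemma sub_vertices:
  assumes "\<sigma> \<in> T" "card \<sigma> \<ge> 2"
  shows "vertices (sub T \<sigma> w) = insert w (vertices T)"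
proof
  show "vertices (sub T \<sigma> w) \<subseteq> insert w (vertices T)"
    using assms(1) by (auto simp: vertices_def sub_def)
  show "insert w (vertices T) \<subseteq> vertices (sub T \<sigma> w)"
  proof
    fix v assume v: "v \<in> insert w (vertices T)"
    have "insert w {} \<in> sub T \<sigma> w"
      using assms(2) by (auto simp: sub_def intro!: image_eqI[of _ _ "{}"])
    moreover have "v \<in> vertices (sub T \<sigma> w)" if hv: "v \<in> vertices T"
    proof -
      obtain \<tau> where t: "\<tau> \<in> T" "v \<in> \<tau>" using hv by (auto simp: vertices_def)
      show ?thesis
      proof (cases "\<tau> = \<sigma>")
        case False thus ?thesis using t by (auto simp: vertices_def sub_def)
      next
        case True
        have "{v} \<noteq> \<sigma>" using assms(2) by auto
        hence "{v} \<subset> \<sigma>" using t True by auto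
        hence "insert w {v} \<in> sub T \<sigma> w" by (auto simp: sub_def)
        thus ?thesis by (auto simp: vertices_def)
      qed
    qed
    ultimately show "v \<in> vertices (sub T \<sigma> w)" using v by (auto simp: vertices_def)
  qed
qed



fun Tm :: "nat \<Rightarrow> nat \<Rightarrow> nat set set" where
  "Tm n 0 = cross n"
| "Tm n (Suc m) = sub (Tm n m) {n+m..<n+n+m} (n+n+m)"

definition Gf :: "nat \<Rightarrow> nat \<Rightarrow> nat set" where
  "Gf n j = insert (n+n+j) ({n+j..<n+n+j} - {n+n+j-1})"

definition win :: "nat \<Rightarrow> nat set \<Rightarrow> bool" where
  "win n \<tau> \<longleftrightarrow> \<tau> \<subseteq> {..<n+n} \<or> (\<exists>a. \<tau> \<subseteq> {a..a+n})"

definition I2 :: "nat \<Rightarrow> nat set \<Rightarrow> bool" where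
  "I2 m \<tau> \<longleftrightarrow> (card \<tau> = 2 \<longrightarrow> \<tau> \<subseteq> {..<4} \<or> (\<exists>a. \<tau> = {a, a+2}) \<or> \<tau> = {m+2, m+3})"

lemma dsub: "x \<in> A \<Longrightarrow> A - {x} \<subset> A"
  by blast

lemma cross_card: assumes "\<tau> \<in> cross n" shows "card \<tau> \<le> n"
proof -
  define h where "h = (\<lambda>v. if v < n then v else v - n)"
  have t: "\<tau> \<subseteq> {..<n+n}" "\<forall>j<n. \<not> (j \<in> \<tau> \<and> n + j \<in> \<tau>)" using assms by (auto simp: cross_def)
  have inj: "inj_on h \<tau>"
  proof (rule inj_onI)
    fix u v assume uv: "u \<in> \<tau>" "v \<in> \<tau>" "h u = h v"
    show "u = v"
    proof (cases "u < n"; cases "v < n")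
      assume "u < n" "\<not> v < n"
      hence "v = n + u" using uv by (auto simp: h_def)
      thus "u = v" using t uv \<open>u < n\<close> by blast
    next
      assume "\<not> u < n" "v < n"
      hence "u = n + v" using uv by (auto simp: h_def)
      thus "u = v" using t uv \<open>v < n\<close> by blast
    qed (use uv in \<open>auto simp: h_def\<close>)
  qed
  have sub: "h ` \<tau> \<subseteq> {..<n}" using t by (auto simp: h_def)
  have "card (h ` \<tau>) \<le> card {..<n}" by (rule card_mono[OF _ sub]) simp
  moreover have "card (h ` \<tau>) = card \<tau>" by (rule card_image[OF inj])
  ultimately show ?thesis by simp
qed

lemma Tm_inv:
  assumes n2: "n \<ge> 2"
  shows "simplicial_complex (Tm n m) \<and> (\<forall>\<tau>\<in>Tm n m. card \<tau> \<le> n) \<and> {n+m..<n+n+m} \<in> Tm n m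
    \<and> vertices (Tm n m) = {..<n+n+m} \<and> (\<forall>\<tau>\<in>Tm n m. win n \<tau>) \<and> (\<forall>j<m. Gf n j \<in> Tm n m)
    \<and> (n = 2 \<longrightarrow> (\<forall>\<tau>\<in>Tm n m. I2 m \<tau>))"
proof (induction m)
  case 0
  have "{n..<n+n} \<in> cross n" using n2 by (auto simp: cross_def)
  moreover have "vertices (cross n) = {..<n+n}"
  proof
    show "vertices (cross n) \<subseteq> {..<n+n}" by (auto simp: vertices_def cross_def)
    show "{..<n+n} \<subseteq> vertices (cross n)"
    proof
      fix v assume "v \<in> {..<n+n}"
      hence "{v} \<in> cross n" by (auto simp: cross_def)
      thus "v \<in> vertices (cross n)" by (auto simp: vertices_def)
    qed
  qed
  moreover have "\<forall>\<tau>\<in>cross n. win n \<tau>" by (auto simp: win_def cross_def)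
  moreover have "n = 2 \<longrightarrow> (\<forall>\<tau>\<in>cross n. I2 0 \<tau>)" by (auto simp: I2_def cross_def)
  ultimately show ?case using cross_sc cross_card by simp
next
  case (Suc m)
  define T where "T = Tm n m"
  define \<sigma> where "\<sigma> = {n+m..<n+n+m}"
  define w where "w = n+n+m"
  have sc: "simplicial_complex T" and cb: "\<forall>\<tau>\<in>T. card \<tau> \<le> n" and sT: "\<sigma> \<in> T"
    and vT: "vertices T = {..<n+n+m}" and wn: "\<forall>\<tau>\<in>T. win n \<tau>" and gT: "\<forall>j<m. Gf n j \<in> T"
    and i2: "n = 2 \<longrightarrow> (\<forall>\<tau>\<in>T. I2 m \<tau>)"
    using Suc.IH by (simp_all add: T_def \<sigma>_def)
  have TS: "Tm n (Suc m) = sub T \<sigma> w" by (simp add: T_def \<sigma>_def w_def)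
  have cs: "card \<sigma> = n" by (simp add: \<sigma>_def)
  have fin: "\<And>\<tau>. \<tau> \<in> T \<Longrightarrow> finite \<tau>" using sc unfolding simplicial_complex_def by blast
  have mx: "\<And>\<tau>. \<tau> \<in> T \<Longrightarrow> \<sigma> \<subseteq> \<tau> \<Longrightarrow> \<tau> = \<sigma>"
  proof -
    fix \<tau> assume a: "\<tau> \<in> T" "\<sigma> \<subseteq> \<tau>"
    have "card \<tau> \<le> card \<sigma>" using cb cs a by auto
    thus "\<tau> = \<sigma>" using card_seteq[OF fin[OF a(1)] a(2)] by simp
  qed
  have wnot: "w \<notin> \<sigma>" by (simp add: w_def \<sigma>_def)
  have new: "\<And>\<tau>. \<tau> \<in> sub T \<sigma> w \<Longrightarrow> \<tau> \<notin> T - {\<sigma>} \<Longrightarrow> \<exists>\<rho>. \<tau> = insert w \<rho> \<and> \<rho> \<subset> \<sigma>"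
    by (auto simp: sub_def)
  have old: "\<And>\<tau>. \<tau> \<in> T - {\<sigma>} \<Longrightarrow> \<tau> \<in> sub T \<sigma> w" by (auto simp: sub_def)
  have newin: "\<And>\<rho>. \<rho> \<subset> \<sigma> \<Longrightarrow> insert w \<rho> \<in> sub T \<sigma> w" by (auto simp: sub_def)
  have p1: "simplicial_complex (sub T \<sigma> w)" by (rule sub_sc[OF sc sT mx])
  have p2: "\<forall>\<tau>\<in>sub T \<sigma> w. card \<tau> \<le> n"
  proof
    fix \<tau> assume t: "\<tau> \<in> sub T \<sigma> w"
    show "card \<tau> \<le> n"
    proof (cases "\<tau> \<in> T - {\<sigma>}")
      case True thus ?thesis using cb by auto
    next
      case False
      then obtain \<rho> where r: "\<tau> = insert w \<rho>" "\<rho> \<subset> \<sigma>" using new[OF t False] by blast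
      have fs: "finite \<sigma>" by (simp add: \<sigma>_def)
      have "card \<rho> < card \<sigma>" by (rule psubset_card_mono[OF fs r(2)])
      moreover have "finite \<rho>" using r finite_subset[of \<rho> \<sigma>] by (auto simp: \<sigma>_def)
      ultimately show ?thesis using r cs by (simp add: card_insert_if)
    qed
  qed
  have p3: "{n + Suc m..<n + n + Suc m} \<in> sub T \<sigma> w"
  proof -
    have "{n + Suc m..<n + n + Suc m} = insert w (\<sigma> - {n+m})" using n2 by (auto simp: w_def \<sigma>_def set_eq_iff)
    moreover have "\<sigma> - {n+m} \<subset> \<sigma>" by (rule dsub) (use n2 in \<open>simp add: \<sigma>_def\<close>)
    ultimately show ?thesis using newin by simp
  qed
  have p4: "vertices (sub T \<sigma> w) = {..<n + n + Suc m}"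
    using sub_vertices[OF sT] cs n2 vT by (simp add: w_def lessThan_Suc)
  have p5: "\<forall>\<tau>\<in>sub T \<sigma> w. win n \<tau>"
  proof
    fix \<tau> assume t: "\<tau> \<in> sub T \<sigma> w"
    show "win n \<tau>"
    proof (cases "\<tau> \<in> T - {\<sigma>}")
      case True thus ?thesis using wn by auto
    next
      case False
      then obtain \<rho> where r: "\<tau> = insert w \<rho>" "\<rho> \<subset> \<sigma>" using new[OF t False] by blast
      hence "\<tau> \<subseteq> {n+m..n+m+n}" by (auto simp: w_def \<sigma>_def)
      thus ?thesis unfolding win_def by blast
    qed
  qed
  have Gne: "Gf n j \<noteq> \<sigma>" for j
  proof
    assume e: "Gf n j = \<sigma>"
    have "n + j \<in> Gf n j" "n + n + j \<in> Gf n j" "n + n + j - 1 \<notin> Gf n j" using n2 by (auto simp: Gf_def)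
    hence "n + j \<in> \<sigma>" "n + n + j \<in> \<sigma>" using e by auto
    hence "n + n + j - 1 \<in> \<sigma>" by (simp add: \<sigma>_def)
    thus False using e \<open>n + n + j - 1 \<notin> Gf n j\<close> by simp
  qed
  have p6: "\<forall>j<Suc m. Gf n j \<in> sub T \<sigma> w"
  proof (intro allI impI)
    fix j assume "j < Suc m"
    show "Gf n j \<in> sub T \<sigma> w"
    proof (cases "j = m")
      case True
      have "{n+m..<n+n+m} - {n+n+m-1} \<subset> \<sigma>" unfolding \<sigma>_def by (rule dsub) (use n2 in simp)
      thus ?thesis using newin True by (simp add: Gf_def w_def)
    next
      case False
      hence "j < m" using \<open>j < Suc m\<close> by simp
      thus ?thesis using gT Gne old by auto
    qed
  qed
  have p7: "n = 2 \<longrightarrow> (\<forall>\<tau>\<in>sub T \<sigma> w. I2 (Suc m) \<tau>)"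
  proof (intro impI ballI)
    fix \<tau> assume n2': "n = 2" and t: "\<tau> \<in> sub T \<sigma> w"
    have sg: "\<sigma> = {m+2, m+3}" using n2' by (auto simp: \<sigma>_def set_eq_iff)
    show "I2 (Suc m) \<tau>"
    proof (cases "\<tau> \<in> T - {\<sigma>}")
      case True
      hence "I2 m \<tau>" using i2 n2' by auto
      thus ?thesis using True sg by (auto simp: I2_def)
    next
      case False
      then obtain \<rho> where r: "\<tau> = insert w \<rho>" "\<rho> \<subset> \<sigma>" using new[OF t False] by blast
      show ?thesis unfolding I2_def
      proof
        assume c2: "card \<tau> = 2"
        have fr: "finite \<rho>" using r finite_subset[of \<rho> \<sigma>] by (auto simp: \<sigma>_def)
        have "w \<notin> \<rho>" using r wnot by auto
        hence "card \<rho> = 1" using c2 r fr by (simp add: card_insert_if)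
        then obtain x where x: "\<rho> = {x}" by (auto simp: card_Suc_eq)
        hence "x = m+2 \<or> x = m+3" using r sg by auto
        thus "\<tau> \<subseteq> {..<4} \<or> (\<exists>a. \<tau> = {a, a + 2}) \<or> \<tau> = {Suc m + 2, Suc m + 3}"
        proof
          assume "x = m+2"
          hence "\<tau> = {m+2, m+2+2}" using r x n2' by (auto simp: w_def)
          thus ?thesis by blast
        next
          assume "x = m+3"
          hence "\<tau> = {Suc m + 2, Suc m + 3}" using r x n2' by (auto simp: w_def)
          thus ?thesis by blast
        qed
      qed
    qed
  qed
  show ?case unfolding TS using p1 p2 p3 p4 p5 p6 p7 by blast
qed

lemma Tm_homeo:
  assumes n2: "n \<ge> 2"
  shows "realization (Tm n m) homeomorphic realization (cross n)"
proof (induction m)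
  case 0 then show ?case by (simp add: homeomorphic_refl)
next
  case (Suc m)
  have I: "simplicial_complex (Tm n m)" "\<forall>\<tau>\<in>Tm n m. card \<tau> \<le> n" "{n+m..<n+n+m} \<in> Tm n m"
    "vertices (Tm n m) = {..<n+n+m}" using Tm_inv[OF n2, of m] by auto
  have fin: "\<And>\<tau>. \<tau> \<in> Tm n m \<Longrightarrow> finite \<tau>" using I(1) unfolding simplicial_complex_def by blast
  have mx: "\<And>\<tau>. \<tau> \<in> Tm n m \<Longrightarrow> {n+m..<n+n+m} \<subseteq> \<tau> \<Longrightarrow> \<tau> = {n+m..<n+n+m}"
  proof -
    fix \<tau> assume "\<tau> \<in> Tm n m" "{n+m..<n+n+m} \<subseteq> \<tau>"
    thus "\<tau> = {n+m..<n+n+m}" using I(2) fin card_seteq[of \<tau> "{n+m..<n+n+m}"] by auto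
  qed
  have "realization (Tm n (Suc m)) homeomorphic realization (Tm n m)"
    using sub_homeo[OF I(1) I(3) mx] I(4) by simp
  thus ?case using Suc.IH homeomorphic_trans by blast
qed



definition U :: "nat \<Rightarrow> nat \<Rightarrow> nat set" where
  "U n v = ({..<n+n} \<union> {v-n..v+n}) - {v}"

lemma U_fin: "finite (U n v)"
  by (simp add: U_def)

lemma U_card: "card (U n v) \<le> 4 * n"
proof -
  have c1: "card {v-n..v+n} \<le> 2*n+1" by simp
  have c2: "card ({v-n..v+n} - {v}) \<le> 2*n" using c1 by (simp add: card_Diff_singleton)
  have "U n v \<subseteq> {..<n+n} \<union> ({v-n..v+n} - {v})" by (auto simp: U_def)
  hence "card (U n v) \<le> card ({..<n+n} \<union> ({v-n..v+n} - {v}))" by (intro card_mono) auto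
  also have "\<dots> \<le> card {..<n+n} + card ({v-n..v+n} - {v})" by (rule card_Un_le)
  also have "\<dots> \<le> 4 * n" using c2 by simp
  finally show ?thesis .
qed

lemma win_nbhd: assumes "win n \<tau>" "v \<in> \<tau>" shows "\<tau> \<subseteq> insert v (U n v)"
proof
  fix u assume u: "u \<in> \<tau>"
  show "u \<in> insert v (U n v)"
  proof (cases "\<tau> \<subseteq> {..<n+n}")
    case True thus ?thesis using u by (auto simp: U_def)
  next
    case False
    then obtain a where a: "\<tau> \<subseteq> {a..a+n}" using assms(1) by (auto simp: win_def)
    hence "a \<le> u" "u \<le> a + n" "a \<le> v" "v \<le> a + n" using u assms(2) by auto
    hence "v - n \<le> u" "u \<le> v + n" by linarith+
    thus ?thesis by (auto simp: U_def)
  qed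
qed

lemma finite_skel: "simplicial_complex T \<Longrightarrow> finite (skel i T)"
  unfolding simplicial_complex_def skel_def by auto

lemma deg_bound:
  assumes sc: "simplicial_complex T" and w: "\<forall>\<tau>\<in>T. win n \<tau>"
  shows "Delta_ij 0 1 T \<le> 4 * n"
proof -
  have "card {\<tau>\<in>skel 1 T. \<sigma> \<subseteq> \<tau>} \<le> 4 * n" if s: "\<sigma> \<in> skel 0 T" for \<sigma>
  proof -
    have "card \<sigma> = 1" using s by (simp add: skel_def)
    then obtain v where v: "\<sigma> = {v}" by (auto simp: card_Suc_eq)
    have "{\<tau>\<in>skel 1 T. \<sigma> \<subseteq> \<tau>} \<subseteq> (\<lambda>u. {v, u}) ` U n v"
    proof
      fix \<tau> assume t: "\<tau> \<in> {\<tau>\<in>skel 1 T. \<sigma> \<subseteq> \<tau>}"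
      hence tT: "\<tau> \<in> T" and c2: "card \<tau> = 2" and vt: "v \<in> \<tau>" using v by (auto simp: skel_def)
      have ft: "finite \<tau>" using c2 card_ge_0_finite[of \<tau>] by simp
      have "card (\<tau> - {v}) = 1" using c2 vt ft by (simp add: card_Diff_singleton)
      then obtain u where u: "\<tau> - {v} = {u}" by (auto simp: card_Suc_eq)
      hence tu: "\<tau> = {v, u}" using vt by auto
      have "u \<in> U n v" using win_nbhd[OF w[rule_format, OF tT] vt] u by auto
      thus "\<tau> \<in> (\<lambda>u. {v, u}) ` U n v" using tu by auto
    qed
    hence "card {\<tau>\<in>skel 1 T. \<sigma> \<subseteq> \<tau>} \<le> card ((\<lambda>u. {v, u}) ` U n v)"
      by (intro card_mono) (simp_all add: U_fin)
    also have "\<dots> \<le> card (U n v)" by (rule card_image_le[OF U_fin])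
    also have "\<dots> \<le> 4 * n" by (rule U_card)
    finally show ?thesis .
  qed
  thus ?thesis unfolding Delta_ij_def using finite_skel[OF sc, of 0] by (auto simp: Max_le_iff)
qed

lemma Dij_bound:
  assumes sc: "simplicial_complex T" and w: "\<forall>\<tau>\<in>T. win n \<tau>"
  shows "Delta_ij i j T \<le> 2 ^ (4 * n + 1)"
proof -
  have "card {\<tau>\<in>skel j T. \<sigma> \<subseteq> \<tau>} \<le> 2 ^ (4 * n + 1)" if s: "\<sigma> \<in> skel i T" for \<sigma>
  proof -
    have "card \<sigma> = i + 1" using s by (simp add: skel_def)
    hence "\<sigma> \<noteq> {}" by auto
    then obtain v where v: "v \<in> \<sigma>" by auto
    have "{\<tau>\<in>skel j T. \<sigma> \<subseteq> \<tau>} \<subseteq> Pow (insert v (U n v))"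
    proof
      fix \<tau> assume "\<tau> \<in> {\<tau>\<in>skel j T. \<sigma> \<subseteq> \<tau>}"
      hence tT: "\<tau> \<in> T" and vt: "v \<in> \<tau>" using v by (auto simp: skel_def)
      show "\<tau> \<in> Pow (insert v (U n v))" using win_nbhd[OF w[rule_format, OF tT] vt] by simp
    qed
    hence "card {\<tau>\<in>skel j T. \<sigma> \<subseteq> \<tau>} \<le> card (Pow (insert v (U n v)))"
      by (intro card_mono) (simp_all add: U_fin)
    also have "\<dots> = 2 ^ card (insert v (U n v))" by (simp add: card_Pow U_fin)
    also have "\<dots> \<le> 2 ^ (4 * n + 1)"
    proof (rule power_increasing)
      have "card (insert v (U n v)) \<le> card (U n v) + 1" by (simp add: card_insert_le_m1 U_fin card_insert_if)
      thus "card (insert v (U n v)) \<le> 4 * n + 1" using U_card[of n v] by simp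
    qed simp
    finally show ?thesis .
  qed
  thus ?thesis unfolding Delta_ij_def using finite_skel[OF sc, of i] by (auto simp: Max_le_iff)
qed

lemma Delta_bound:
  assumes sc: "simplicial_complex T" and w: "\<forall>\<tau>\<in>T. win n \<tau>"
  shows "Delta T \<le> 2 ^ (4 * n + 1)"
  unfolding Delta_def using Dij_bound[OF sc w] by (auto simp: Max_le_iff)

lemma Gf_card: assumes "n \<ge> 2" shows "card (Gf n j) = n"
proof -
  have "n + n + j - 1 \<in> {n+j..<n+n+j}" using assms by auto
  hence "card ({n+j..<n+n+j} - {n+n+j-1}) = n - 1" by (simp add: card_Diff_singleton)
  moreover have "n + n + j \<notin> {n+j..<n+n+j} - {n+n+j-1}" by simp
  ultimately show ?thesis using assms by (simp add: Gf_def)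
qed

lemma Gf_range: "Gf n j \<subseteq> {n+j..n+n+j}"
  by (auto simp: Gf_def)

lemma sep_win:
  assumes w: "\<forall>\<tau>\<in>T. win n \<tau>" and jj: "j + (2*n+1) \<le> j'"
    and u: "u \<in> Gf n j" and v: "v \<in> Gf n j'"
  shows "u < v \<and> {u, v} \<notin> T"
proof -
  have r: "n + j \<le> u" "u \<le> n+n+j" "n + j' \<le> v" "v \<le> n+n+j'" using u v Gf_range[of n j] Gf_range[of n j'] by auto
  have uv: "u < v" using r jj by linarith
  moreover have "{u, v} \<notin> T"
  proof
    assume "{u, v} \<in> T"
    hence "win n {u, v}" using w by auto
    thus False
    proof (unfold win_def, elim disjE exE)
      assume "{u, v} \<subseteq> {..<n+n}"
      thus False using r jj by auto
    next
      fix a assume "{u, v} \<subseteq> {a..a+n}"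
      hence "a \<le> u" "v \<le> a + n" by auto
      thus False using r jj by linarith
    qed
  qed
  ultimately show ?thesis by blast
qed

lemma sep_I2:
  assumes w: "\<forall>\<tau>\<in>T. I2 m \<tau>" and ii: "i < i'" and im: "3*i + 2 < m"
    and u: "u \<in> Gf 2 (3*i)" and v: "v \<in> Gf 2 (3*i')"
  shows "u < v \<and> {u, v} \<notin> skel 1 T"
proof -
  have uu: "u = 2 + 3*i \<or> u = 4 + 3*i" using u by (auto simp: Gf_def)
  have vv: "v = 2 + 3*i' \<or> v = 4 + 3*i'" using v by (auto simp: Gf_def)
  have ii': "i' = i + 1 \<or> i + 2 \<le> i'" using ii by linarith
  have uv: "u < v" using uu vv ii by auto
  moreover have "{u, v} \<notin> skel 1 T"
  proof
    assume "{u, v} \<in> skel 1 T"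
    hence "I2 m {u, v}" "card {u, v} = 2" using w by (auto simp: skel_def)
    hence "{u, v} \<subseteq> {..<4} \<or> (\<exists>a. {u, v} = {a, a+2}) \<or> {u, v} = {m+2, m+3}" by (simp add: I2_def)
    thus False
    proof (elim disjE exE)
      assume "{u, v} \<subseteq> {..<4}" thus False using vv ii by auto
    next
      fix a assume "{u, v} = {a, a+2}"
      hence "v = u + 2" using uv by (auto simp: doubleton_eq_iff)
      thus False using uu vv ii' by (elim disjE) linarith+
    next
      assume "{u, v} = {m+2, m+3}"
      hence "u = m + 2" "v = m + 3" using uv by (auto simp: doubleton_eq_iff)
      thus False using uu vv ii' im by (elim disjE) linarith+
    qed
  qed
  ultimately show ?thesis by blast
qed



lemma sepfac:
  assumes mem: "\<forall>i<k. t i \<in> skel d T"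
    and pr: "\<And>i j u v. i < j \<Longrightarrow> j < k \<Longrightarrow> u \<in> t i \<Longrightarrow> v \<in> t j \<Longrightarrow> u < v \<and> {u, v} \<notin> skel 1 T"
  shows "has_separated_facets T d k"
  unfolding has_separated_facets_def
proof (intro exI[of _ t] conjI allI impI)
  show "\<And>i. i < k \<Longrightarrow> t i \<in> skel d T" using mem by blast
  fix i j assume ij: "i < k" "j < k" "i \<noteq> j"
  show "t i \<inter> t j = {}"
  proof (rule ccontr)
    assume "t i \<inter> t j \<noteq> {}"
    then obtain u where "u \<in> t i" "u \<in> t j" by blast
    thus False using pr ij by (metis less_irrefl nat_neq_iff)
  qed
  show "nonadjacent T (t i) (t j)" unfolding nonadjacent_def
  proof (intro ballI)
    fix u v assume uv: "u \<in> t i" "v \<in> t j"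
    show "{u, v} \<notin> skel 1 T"
    proof (cases "i < j")
      case True thus ?thesis using pr ij uv by blast
    next
      case False
      hence "j < i" using ij by simp
      hence "{v, u} \<notin> skel 1 T" using pr ij uv by blast
      thus ?thesis by (simp add: insert_commute)
    qed
  qed
qed

lemma main_k:
  fixes d k :: nat
  assumes card: "CARD('n::finite) = d + 1" and d1: "d \<ge> 1" and k1: "k \<ge> 1"
  shows "\<exists>T. triangulates_sphere T TYPE('n) \<and>
            Delta_ij 0 1 T \<le> (d + 1) * (d^2 + d + 2) \<and>
            card (vertices T) = (d^2 + d + 1) * k + (d + 2)^2 \<and>
            has_separated_facets T d k \<and> Delta T \<le> 2 ^ (4 * (d+1) + 1)"
proof -
  define n where "n = d + 1"
  have n2: "n \<ge> 2" using d1 by (simp add: n_def)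
  obtain e0 where "bij_betw e0 (UNIV::'n set) {0..<card (UNIV::'n set)}"
    using ex_bij_betw_finite_nat[of "UNIV::'n set"] by auto
  hence e: "bij_betw e0 (UNIV::'n set) {..<n}" using card by (simp add: n_def atLeast0LessThan)
  have base: "realization (cross n) homeomorphic sphere (0::real^'n) 1"
    using cross_homeo[OF e] l1_sphere homeomorphic_trans by blast
  define m where "m = (d^2 + d + 1) * k + (d^2 + 2*d + 2)"
  define T where "T = Tm n m"
  have I: "simplicial_complex T" "vertices T = {..<n+n+m}" "\<forall>\<tau>\<in>T. win n \<tau>" "\<forall>j<m. Gf n j \<in> T"
    "n = 2 \<longrightarrow> (\<forall>\<tau>\<in>T. I2 m \<tau>)"
    using Tm_inv[OF n2, of m] by (simp_all add: T_def)
  have tri: "triangulates_sphere T TYPE('n)"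
    unfolding triangulates_sphere_def using I(1) Tm_homeo[OF n2, of m] base homeomorphic_trans
    by (auto simp: T_def)
  have "n + n + m = (d^2 + d + 1) * k + (d + 2)^2"
    by (simp add: n_def m_def power2_eq_square algebra_simps)
  hence cv: "card (vertices T) = (d^2 + d + 1) * k + (d + 2)^2" using I(2) by simp
  have dd: "d \<le> d * d" by (cases d) auto
  have "4 \<le> d^2 + d + 2" using d1 dd unfolding power2_eq_square by linarith
  hence "(d + 1) * 4 \<le> (d + 1) * (d^2 + d + 2)" by (rule mult_le_mono2)
  hence "4 * n \<le> (d + 1) * (d^2 + d + 2)" by (simp only: n_def mult.commute)
  hence dg: "Delta_ij 0 1 T \<le> (d + 1) * (d^2 + d + 2)" using deg_bound[OF I(1) I(3)] by linarith
  have DB: "Delta T \<le> 2 ^ (4 * (d+1) + 1)" using Delta_bound[OF I(1) I(3)] by (simp add: n_def)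
  have sep: "has_separated_facets T d k"
  proof (cases "d = 1")
    case True
    hence nn: "n = 2" by (simp add: n_def)
    have i2: "\<forall>\<tau>\<in>T. I2 m \<tau>" using I(5) nn by simp
    have mm: "m = 3 * k + 5" using True by (simp add: m_def)
    show ?thesis
    proof (rule sepfac[where t = "\<lambda>i. Gf 2 (3*i)"])
      show "\<forall>i<k. Gf 2 (3 * i) \<in> skel d T"
      proof (intro allI impI)
        fix i assume "i < k"
        hence "3 * i < m" using mm by simp
        hence "Gf 2 (3*i) \<in> T" using I(4) nn by simp
        thus "Gf 2 (3 * i) \<in> skel d T" using Gf_card[of 2 "3*i"] True by (simp add: skel_def)
      qed
      fix i j u v assume "i < j" "j < k" "u \<in> Gf 2 (3 * i)" "v \<in> Gf 2 (3 * j)"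
      moreover have "3*i + 2 < m" using \<open>i < j\<close> \<open>j < k\<close> mm by simp
      ultimately show "u < v \<and> {u, v} \<notin> skel 1 T" using sep_I2[OF i2] by blast
    qed
  next
    case False
    hence d2: "d \<ge> 2" using d1 by simp
    have cle: "2*n+1 \<le> d^2 + d + 1"
    proof -
      have "d * 2 \<le> d * d" using d2 by (intro mult_le_mono) auto
      hence "d + 2 \<le> d * d" using d2 by linarith
      thus ?thesis unfolding n_def power2_eq_square by simp
    qed
    show ?thesis
    proof (rule sepfac[where t = "\<lambda>i. Gf n ((2*n+1)*i)"])
      show "\<forall>i<k. Gf n ((2*n+1)*i) \<in> skel d T"
      proof (intro allI impI)
        fix i assume "i < k"
        have "(2*n+1)*i \<le> (d^2+d+1)*i" using cle by (rule mult_le_mono1)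
        also have "\<dots> \<le> (d^2+d+1)*k" using \<open>i < k\<close> by (intro mult_le_mono2) simp
        also have "\<dots> < m" by (simp add: m_def)
        finally have "Gf n ((2*n+1)*i) \<in> T" using I(4) by simp
        thus "Gf n ((2*n+1)*i) \<in> skel d T" using Gf_card[OF n2] by (simp add: skel_def n_def)
      qed
      fix i j u v assume ij: "i < j" "j < k" "u \<in> Gf n ((2*n+1)*i)" "v \<in> Gf n ((2*n+1)*j)"
      have "(2*n+1)*(i+1) \<le> (2*n+1)*j" using ij(1) by (intro mult_le_mono2) simp
      hence "(2*n+1)*i + (2*n+1) \<le> (2*n+1)*j" by simp
      hence "u < v \<and> {u, v} \<notin> T" using sep_win[OF I(3) _ ij(3) ij(4)] by blast
      thus "u < v \<and> {u, v} \<notin> skel 1 T" by (auto simp: skel_def)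
    qed
  qed
  show ?thesis using tri dg cv sep DB by blast
qed

theorem lemma9:
  fixes d :: nat
  assumes "CARD('n::finite) = d + 1" and "d \<ge> 1"
  shows "(\<forall>k\<ge>1. \<exists>T. triangulates_sphere T TYPE('n) \<and>
            Delta_ij 0 1 T \<le> (d + 1) * (d^2 + d + 2) \<and>
            card (vertices T) = (d^2 + d + 1) * k + (d + 2)^2 \<and>
            has_separated_facets T d k)
       \<and> (\<exists>L::nat. \<forall>k\<ge>1. \<exists>T. triangulates_sphere T TYPE('n) \<and>
            Delta T \<le> L \<and> card (vertices T) \<le> L * k \<and>
            has_separated_facets T d k)"
proof
  show "\<forall>k\<ge>1. \<exists>T. triangulates_sphere T TYPE('n) \<and>
            Delta_ij 0 1 T \<le> (d + 1) * (d^2 + d + 2) \<and>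
            card (vertices T) = (d^2 + d + 1) * k + (d + 2)^2 \<and>
            has_separated_facets T d k"
    using main_k[OF assms] by blast
  define L where "L = max (2 ^ (4 * (d+1) + 1)) ((d^2 + d + 1) + (d + 2)^2)"
  have "\<forall>k\<ge>1. \<exists>T. triangulates_sphere T TYPE('n) \<and>
            Delta T \<le> L \<and> card (vertices T) \<le> L * k \<and>
            has_separated_facets T d k"
  proof (intro allI impI)
    fix k :: nat assume k1: "k \<ge> 1"
    obtain T where T: "triangulates_sphere T TYPE('n)"
      "card (vertices T) = (d^2 + d + 1) * k + (d + 2)^2" "has_separated_facets T d k"
      "Delta T \<le> 2 ^ (4 * (d+1) + 1)"
      using main_k[OF assms k1] by blast
    have "(d + 2)^2 \<le> (d + 2)^2 * k" using k1 by simp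
    hence "card (vertices T) \<le> ((d^2 + d + 1) + (d + 2)^2) * k" using T(2) by (simp add: algebra_simps)
    also have "\<dots> \<le> L * k" by (intro mult_le_mono1) (simp add: L_def)
    finally have "card (vertices T) \<le> L * k" .
    moreover have "Delta T \<le> L" using T(4) by (simp add: L_def)
    ultimately show "\<exists>T. triangulates_sphere T TYPE('n) \<and> Delta T \<le> L \<and> card (vertices T) \<le> L * k \<and>
            has_separated_facets T d k" using T by blast
  qed
  thus "\<exists>L::nat. \<forall>k\<ge>1. \<exists>T. triangulates_sphere T TYPE('n) \<and>
            Delta T \<le> L \<and> card (vertices T) \<le> L * k \<and>
            has_separated_facets T d k" by blast
qed


end
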